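(* $f_{2,2,1}(q^2,q,q)=J_{1}J_{2}$.
   Context: Let $q=e^{2\pi i\tau}$ with $\operatorname{Im}\tau>0$. For a positive integer $m$, $J_m:=\prod_{i\ge1}(1-q^{mi})$. For positive integers $a,b,c$ and $x,y\in\mathbb{C}^*$, the Hecke-type double-sum is $f_{a,b,c}(x,y,q):=\Big(\sum_{r,s\ge0}-\sum_{r,s<0}\Big)(-1)^{r+s}x^ry^sq^{a\binom{r}{2}+brs+c\binom{s}{2}}$. *)

theory Defs
  imports "HOL-Analysis.Analysis"
begin

definition choose2 :: "int \<Rightarrow> int" where
  "choose2 k = k * (k - 1) div 2"

definition J :: "complex \<Rightarrow> nat \<Rightarrow> complex" where
  "J q m = (\<Prod>i. (1 - q ^ (m * Suc i)))"

definition hecke_f :: "nat \<Rightarrow> nat \<Rightarrow> nat \<Rightarrow> complex \<Rightarrow> complex \<Rightarrow> complex \<Rightarrow> complex" where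
  "hecke_f a b c x y q =
     (let t = (\<lambda>(r::int, s::int). (-1) powi (r + s) * x powi r * y powi s *
                 q powi (int a * choose2 r + int b * r * s + int c * choose2 s))
      in infsum t {(r, s). r \<ge> 0 \<and> s \<ge> 0} - infsum t {(r, s). r < 0 \<and> s < 0})"

end

theory Submission
  imports Defs
begin


definition Pc :: "complex \<Rightarrow> nat \<Rightarrow> complex" where
  "Pc x n = (\<Prod>i<n. 1 - x ^ Suc i)"

lemma Pc_0 [simp]: "Pc x 0 = 1" by (simp add: Pc_def)
lemma Pc_Suc: "Pc x (Suc n) = Pc x n * (1 - x ^ Suc n)"
  by (simp add: Pc_def)

lemma nx_pow_lt1: "norm (x::complex) < 1 \<Longrightarrow> norm x ^ Suc i < 1"
  using power_less_one_iff[of "norm x" "Suc i"] by simp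

lemma summ_nx: "norm (x::complex) < 1 \<Longrightarrow> summable (\<lambda>i. norm x ^ Suc i)"
  unfolding power_Suc by (intro summable_mult summable_geometric) simp

lemma pow_ne1: "norm (x::complex) < 1 \<Longrightarrow> x ^ Suc i \<noteq> 1"
proof
  assume "norm x < 1" "x ^ Suc i = 1"
  then have "norm x ^ Suc i = 1" by (metis norm_one norm_power)
  moreover have "norm x ^ Suc i < 1" using \<open>norm x < 1\<close> by (rule nx_pow_lt1)
  ultimately show False by simp
qed

lemma Pc_nz: "norm x < 1 \<Longrightarrow> Pc x n \<noteq> 0"
  unfolding Pc_def using pow_ne1 by (auto simp: prod_zero_iff)

lemma Pc_conv:
  assumes "norm x < 1"
  shows "Pc x \<longlonglongrightarrow> prodinf (\<lambda>i. 1 - x ^ Suc i)" "prodinf (\<lambda>i. 1 - x ^ Suc i) \<noteq> 0"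
proof -
  have s: "summable (\<lambda>i. norm ((1 - x ^ Suc i) - 1))"
    using summ_nx[OF assms] by (simp add: norm_power del: power_Suc)
  have "convergent_prod (\<lambda>i. 1 - x ^ Suc i)"
    by (rule abs_convergent_prod_imp_convergent_prod[OF summable_imp_abs_convergent_prod[OF s]])
  then have hp: "(\<lambda>i. 1 - x ^ Suc i) has_prod prodinf (\<lambda>i. 1 - x ^ Suc i)"
    using convergent_prod_has_prod_iff by blast
  show "Pc x \<longlonglongrightarrow> prodinf (\<lambda>i. 1 - x ^ Suc i)"
    using has_prod_imp_tendsto'[OF hp] unfolding Pc_def .
  show "prodinf (\<lambda>i. 1 - x ^ Suc i) \<noteq> 0"
    by (rule prodinf_nonzero) (use \<open>convergent_prod _\<close> pow_ne1[OF assms] in auto)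
qed

lemma Pc_lower:
  assumes "norm x < 1"
  obtains L where "L > 0" "\<And>n. L \<le> norm (Pc x n)"
proof -
  define r where "r i = 1 - norm x ^ Suc i" for i
  have rpos: "r i > 0" for i using nx_pow_lt1[OF assms] unfolding r_def
    by (simp del: power_Suc)
  have s: "summable (\<lambda>i. norm (r i - 1))"
    using summ_nx[OF assms] by (simp add: r_def del: power_Suc)
  have cp: "convergent_prod r"
    by (rule abs_convergent_prod_imp_convergent_prod[OF summable_imp_abs_convergent_prod[OF s]])
  then have hp: "r has_prod prodinf r" using convergent_prod_has_prod_iff by blast
  have L0: "prodinf r > 0" by (rule less_0_prodinf[OF cp rpos])
  have "prodinf r \<le> norm (Pc x n)" for n
  proof -
    have "prodinf r \<le> prod r {..<n}"
      by (rule prod_ge_prodinf[OF hp]) (use rpos in \<open>auto simp: r_def less_imp_le\<close>)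
    also have "\<dots> \<le> (\<Prod>i<n. norm (1 - x ^ Suc i))"
    proof (rule prod_mono)
      fix i assume "i \<in> {..<n}"
      have "norm (1::complex) - norm (x ^ Suc i) \<le> norm (1 - x ^ Suc i)"
        by (rule norm_triangle_ineq2)
      then show "0 \<le> r i \<and> r i \<le> norm (1 - x ^ Suc i)"
        using rpos[of i] by (simp add: r_def norm_power del: power_Suc)
    qed
    also have "\<dots> = norm (Pc x n)" by (simp add: Pc_def prod_norm)
    finally show ?thesis .
  qed
  with L0 show ?thesis using that by blast
qed



definition qbin :: "complex \<Rightarrow> nat \<Rightarrow> nat \<Rightarrow> complex" where
  "qbin x n k = (if k \<le> n then Pc x n / (Pc x k * Pc x (n - k)) else 0)"

lemma qbin_0 [simp]: "norm x < 1 \<Longrightarrow> qbin x n 0 = 1"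
  using Pc_nz[of x n] by (simp add: qbin_def)

lemma qbin_nn [simp]: "norm x < 1 \<Longrightarrow> qbin x n n = 1"
  using Pc_nz[of x n] by (simp add: qbin_def)

lemma qbin_gt [simp]: "n < k \<Longrightarrow> qbin x n k = 0"
  by (simp add: qbin_def)

lemma pascalA:
  assumes x: "norm x < 1"
  shows "qbin x (Suc n) (Suc k) = x ^ Suc k * qbin x n (Suc k) + qbin x n k"
proof (cases "k < n")
  case True
  then obtain d where n: "n = k + Suc d" by (metis add_Suc_right less_imp_Suc_add add.commute)
  have nz: "Pc x j \<noteq> 0" for j using Pc_nz[OF x] .
  have e1: "Pc x (Suc (Suc (k + d))) = Pc x (k + d) * (1 - x ^ Suc (k+d)) * (1 - x ^ Suc (Suc (k+d)))"
    by (simp add: Pc_Suc del: power_Suc)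
  have e2: "Pc x (Suc (k + d)) = Pc x (k + d) * (1 - x ^ Suc (k+d))"
    by (simp add: Pc_Suc del: power_Suc)
  have e3: "Pc x (Suc k) = Pc x k * (1 - x ^ Suc k)" "Pc x (Suc d) = Pc x d * (1 - x ^ Suc d)"
    by (simp_all add: Pc_Suc del: power_Suc)
  have a1: "1 - x ^ Suc k \<noteq> 0" "1 - x ^ Suc d \<noteq> 0" "1 - x ^ Suc (k+d) \<noteq> 0"
    using pow_ne1[OF x] by (auto simp del: power_Suc)
  have "qbin x (Suc n) (Suc k) = Pc x (Suc (Suc (k + d))) / (Pc x (Suc k) * Pc x (Suc d))"
    by (simp add: qbin_def n)
  moreover have "qbin x n (Suc k) = Pc x (Suc (k + d)) / (Pc x (Suc k) * Pc x d)"
    by (simp add: qbin_def n)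
  moreover have "qbin x n k = Pc x (Suc (k + d)) / (Pc x k * Pc x (Suc d))"
    by (simp add: qbin_def n)
  moreover have "x ^ Suc (Suc (k + d)) = x ^ Suc k * x ^ Suc d"
    by (simp add: power_add[symmetric])
  moreover have gen: "A * W * (1 - u * v) / (Pk * (1 - u) * (Pd * (1 - v))) =
      u * (A * W / (Pk * (1 - u) * Pd)) + A * W / (Pk * (Pd * (1 - v)))"
    if "Pk \<noteq> 0" "Pd \<noteq> 0" "1 - u \<noteq> 0" "1 - v \<noteq> 0" for A W u v Pk Pd :: complex
  proof -
    have "A * W * (1 - (1-U) * (1-V)) / (Pk * U * (Pd * V)) =
      (1-U) * (A * W / (Pk * U * Pd)) + A * W / (Pk * (Pd * V))"
    if "Pk \<noteq> 0" "Pd \<noteq> 0" "U \<noteq> 0" "V \<noteq> 0" for U V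
      using that by (simp add: field_simps)
    from this[of "1-u" "1-v"] that show ?thesis by simp
  qed
  ultimately show ?thesis
    unfolding e1 e2 e3 using nz a1 gen[of "Pc x k" "Pc x d" "x ^ Suc k" "x ^ Suc d"]
    by (simp del: power_Suc)
next
  case False
  then show ?thesis using x
    using Pc_nz[OF x, of n] Pc_nz[OF x, of "Suc n"] by (cases "k = n") (auto simp: qbin_def)
qed

lemma pascalB:
  assumes x: "norm x < 1"
  shows "qbin x (Suc n) (Suc k) = qbin x n (Suc k) + x ^ (n - k) * qbin x n k"
proof (cases "k < n")
  case True
  then obtain d where n: "n = k + Suc d" by (metis add_Suc_right less_imp_Suc_add add.commute)
  have nz: "Pc x j \<noteq> 0" for j using Pc_nz[OF x] .
  have e1: "Pc x (Suc (Suc (k + d))) = Pc x (k + d) * (1 - x ^ Suc (k+d)) * (1 - x ^ Suc (Suc (k+d)))"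
    by (simp add: Pc_Suc del: power_Suc)
  have e2: "Pc x (Suc (k + d)) = Pc x (k + d) * (1 - x ^ Suc (k+d))"
    by (simp add: Pc_Suc del: power_Suc)
  have e3: "Pc x (Suc k) = Pc x k * (1 - x ^ Suc k)" "Pc x (Suc d) = Pc x d * (1 - x ^ Suc d)"
    by (simp_all add: Pc_Suc del: power_Suc)
  have a1: "1 - x ^ Suc k \<noteq> 0" "1 - x ^ Suc d \<noteq> 0" "1 - x ^ Suc (k+d) \<noteq> 0"
    using pow_ne1[OF x] by (auto simp del: power_Suc)
  have "qbin x (Suc n) (Suc k) = Pc x (Suc (Suc (k + d))) / (Pc x (Suc k) * Pc x (Suc d))"
    by (simp add: qbin_def n)
  moreover have "qbin x n (Suc k) = Pc x (Suc (k + d)) / (Pc x (Suc k) * Pc x d)"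
    by (simp add: qbin_def n)
  moreover have "qbin x n k = Pc x (Suc (k + d)) / (Pc x k * Pc x (Suc d))"
    by (simp add: qbin_def n)
  moreover have "x ^ Suc (Suc (k + d)) = x ^ Suc k * x ^ Suc d"
    by (simp add: power_add[symmetric])
  moreover have "n - k = Suc d" using n by simp
  moreover have gen: "A * W * (1 - u * v) / (Pk * (1 - u) * (Pd * (1 - v))) =
      A * W / (Pk * (1 - u) * Pd) + v * (A * W / (Pk * (Pd * (1 - v))))"
    if "Pk \<noteq> 0" "Pd \<noteq> 0" "1 - u \<noteq> 0" "1 - v \<noteq> 0" for A W u v Pk Pd :: complex
  proof -
    have "A * W * (1 - (1-U) * (1-V)) / (Pk * U * (Pd * V)) =
      A * W / (Pk * U * Pd) + (1-V) * (A * W / (Pk * (Pd * V)))"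
    if "Pk \<noteq> 0" "Pd \<noteq> 0" "U \<noteq> 0" "V \<noteq> 0" for U V
      using that by (simp add: field_simps)
    from this[of "1-u" "1-v"] that show ?thesis by simp
  qed
  ultimately show ?thesis
    unfolding e1 e2 e3 using nz a1 gen[of "Pc x k" "Pc x d" "x ^ Suc k" "x ^ Suc d"]
    by (simp del: power_Suc)
next
  case False
  then show ?thesis using x
    using Pc_nz[OF x, of n] Pc_nz[OF x, of "Suc n"] by (cases "k = n") (auto simp: qbin_def)
qed

lemma qbin_fact:
  assumes x: "norm x < 1"
  shows "(1 - x ^ Suc j) * qbin x (Suc n) (Suc j) = (1 - x ^ Suc n) * qbin x n j"
proof (cases "j \<le> n")
  case True
  have nz: "Pc x i \<noteq> 0" for i using Pc_nz[OF x] .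
  have a1: "1 - x ^ Suc j \<noteq> 0" using pow_ne1[OF x] by (auto simp del: power_Suc)
  have "Suc n - Suc j = n - j" by simp
  then show ?thesis using True nz a1
    by (simp add: qbin_def Pc_Suc field_simps del: power_Suc)
next
  case False
  then show ?thesis by simp
qed

definition tri :: "nat \<Rightarrow> nat" where "tri k = (\<Sum>i<k. i)"

lemma tri_Suc: "tri (Suc k) = tri k + k" by (simp add: tri_def)
lemma tri_0 [simp]: "tri 0 = 0" by (simp add: tri_def)

lemma qbinom_thm:
  assumes x: "norm x < 1"
  shows "(\<Sum>k\<le>n. qbin x n k * x ^ tri k * z ^ k) = (\<Prod>i<n. 1 + z * x ^ i)"
proof (induction n arbitrary: z)
  case 0
  then show ?case using x by simp
next
  case (Suc n)
  have "(\<Sum>k\<le>Suc n. qbin x (Suc n) k * x ^ tri k * z ^ k)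
      = 1 + (\<Sum>k\<le>n. qbin x (Suc n) (Suc k) * x ^ tri (Suc k) * z ^ Suc k)"
    by (subst sum.atMost_Suc_shift) (simp add: x del: power_Suc sum.atMost_Suc)
  also have "\<dots> = (1 + (\<Sum>k\<le>n. qbin x n (Suc k) * x ^ tri (Suc k) * (x * z) ^ Suc k))
        + z * (\<Sum>k\<le>n. qbin x n k * x ^ tri k * (x * z) ^ k)"
    unfolding pascalA[OF x] sum_distrib_left
    by (simp add: sum.distrib algebra_simps tri_Suc power_add power_mult_distrib del: power_Suc)
       (simp add: sum.distrib[symmetric] power_Suc algebra_simps)
  also have "1 + (\<Sum>k\<le>n. qbin x n (Suc k) * x ^ tri (Suc k) * (x * z) ^ Suc k)
      = (\<Sum>k\<le>n. qbin x n k * x ^ tri k * (x * z) ^ k)"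
  proof -
    have "(\<Sum>k\<le>Suc n. qbin x n k * x ^ tri k * (x * z) ^ k)
        = 1 + (\<Sum>k\<le>n. qbin x n (Suc k) * x ^ tri (Suc k) * (x * z) ^ Suc k)"
      by (subst sum.atMost_Suc_shift) (simp add: x del: power_Suc sum.atMost_Suc)
    moreover have "(\<Sum>k\<le>Suc n. qbin x n k * x ^ tri k * (x * z) ^ k)
        = (\<Sum>k\<le>n. qbin x n k * x ^ tri k * (x * z) ^ k)"
      by simp
    ultimately show ?thesis by simp
  qed
  also have "(\<Sum>k\<le>n. qbin x n k * x ^ tri k * (x * z) ^ k) + z * (\<Sum>k\<le>n. qbin x n k * x ^ tri k * (x * z) ^ k)
      = (1 + z) * (\<Prod>i<n. 1 + (x * z) * x ^ i)"
    unfolding Suc.IH by (simp add: algebra_simps)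
  also have "\<dots> = (\<Prod>i<Suc n. 1 + z * x ^ i)"
    by (simp add: prod.lessThan_Suc_shift algebra_simps del: prod.lessThan_Suc)
  finally show ?case .
qed

lemma euler_fin:
  assumes x: "norm x < 1"
  shows "(\<Sum>k\<le>n. (-1) ^ k * x ^ tri (Suc k) / (Pc x k * Pc x (n - k))) = 1"
proof -
  have "(\<Sum>k\<le>n. qbin x n k * x ^ tri k * (-x) ^ k) = (\<Prod>i<n. 1 + (-x) * x ^ i)"
    by (rule qbinom_thm[OF x])
  also have "\<dots> = Pc x n" by (simp add: Pc_def)
  finally have e: "(\<Sum>k\<le>n. qbin x n k * x ^ tri k * (-x) ^ k) = Pc x n" .
  have "(\<Sum>k\<le>n. qbin x n k * x ^ tri k * (-x) ^ k)
      = Pc x n * (\<Sum>k\<le>n. (-1) ^ k * x ^ tri (Suc k) / (Pc x k * Pc x (n - k)))"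
    unfolding sum_distrib_left
    by (rule sum.cong) (auto simp: qbin_def tri_Suc power_add power_minus' power_mult_distrib
        algebra_simps)
  with e Pc_nz[OF x, of n] show ?thesis by simp
qed

lemma cauchy_fin:
  assumes x: "norm x < 1"
  shows "(\<Sum>k\<le>N. qbin x N k * (x ^ (k * k + m * k) / Pc x (m + k))) = 1 / Pc x (m + N)"
proof (induction N arbitrary: m)
  case 0
  then show ?case using x by simp
next
  case (Suc N)
  define G where "G k m = x ^ (k * k + m * k) / Pc x (m + k)" for k m
  have ex: "x ^ (N - k) * G (Suc k) m = x ^ (Suc m + N) * G k (Suc m)" if "k \<le> N" for k
  proof -
    obtain d where N: "N = k + d" using \<open>k \<le> N\<close> le_Suc_ex by blast
    have "(N - k) + (Suc k * Suc k + m * Suc k) = (Suc m + N) + (k * k + Suc m * k)"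
      unfolding N by (simp add: algebra_simps)
    then have "x ^ (N - k) * x ^ (Suc k * Suc k + m * Suc k) = x ^ (Suc m + N) * x ^ (k * k + Suc m * k)"
      by (metis power_add)
    then show ?thesis unfolding G_def by (simp add: field_simps del: power_Suc)
  qed
  have "(\<Sum>k\<le>Suc N. qbin x (Suc N) k * G k m)
      = 1 / Pc x m + (\<Sum>k\<le>N. qbin x (Suc N) (Suc k) * G (Suc k) m)"
    by (subst sum.atMost_Suc_shift) (simp add: x G_def del: power_Suc sum.atMost_Suc)
  also have "\<dots> = (1 / Pc x m + (\<Sum>k\<le>N. qbin x N (Suc k) * G (Suc k) m))
        + (\<Sum>k\<le>N. x ^ (N - k) * qbin x N k * G (Suc k) m)"
    unfolding pascalB[OF x] by (simp add: sum.distrib algebra_simps)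
  also have "1 / Pc x m + (\<Sum>k\<le>N. qbin x N (Suc k) * G (Suc k) m) = (\<Sum>k\<le>N. qbin x N k * G k m)"
  proof -
    have "(\<Sum>k\<le>Suc N. qbin x N k * G k m) = 1 / Pc x m + (\<Sum>k\<le>N. qbin x N (Suc k) * G (Suc k) m)"
      by (subst sum.atMost_Suc_shift) (simp add: x G_def del: power_Suc sum.atMost_Suc)
    moreover have "(\<Sum>k\<le>Suc N. qbin x N k * G k m) = (\<Sum>k\<le>N. qbin x N k * G k m)"
      by simp
    ultimately show ?thesis by simp
  qed
  also have "(\<Sum>k\<le>N. x ^ (N - k) * qbin x N k * G (Suc k) m)
      = x ^ (Suc m + N) * (\<Sum>k\<le>N. qbin x N k * G k (Suc m))"
    unfolding sum_distrib_left
  proof (rule sum.cong)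
    fix k assume "k \<in> {..N}"
    then have "x ^ (N - k) * G (Suc k) m = x ^ (Suc m + N) * G k (Suc m)" using ex by simp
    then show "x ^ (N - k) * qbin x N k * G (Suc k) m = x ^ (Suc m + N) * (qbin x N k * G k (Suc m))"
      by (metis mult.commute mult.left_commute)
  qed simp
  also have "(\<Sum>k\<le>N. qbin x N k * G k m) = 1 / Pc x (m + N)"
    using Suc.IH[of m] by (simp add: G_def)
  also have "(\<Sum>k\<le>N. qbin x N k * G k (Suc m)) = 1 / Pc x (Suc m + N)"
    using Suc.IH[of "Suc m"] by (simp add: G_def)
  also have "1 / Pc x (m + N) + x ^ (Suc m + N) * (1 / Pc x (Suc m + N)) = 1 / Pc x (m + Suc N)"
  proof -
    have nz: "Pc x (m + N) \<noteq> 0" using Pc_nz[OF x] .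
    have a1: "1 - x ^ Suc (m + N) \<noteq> 0" using pow_ne1[OF x] by (auto simp del: power_Suc)
    have g: "1 / P + (1 - U) * (1 / (P * U)) = 1 / (P * U)" if "P \<noteq> 0" "U \<noteq> 0" for P U :: complex
      using that by (simp add: field_simps)
    show ?thesis using g[OF nz a1] by (simp add: Pc_Suc del: power_Suc)
  qed
  finally show ?case by (simp add: G_def)
qed

lemma gauss_step:
  assumes x: "norm x < 1"
  shows "(\<Sum>k\<le>Suc (Suc n). (-1) ^ k * qbin x (Suc (Suc n)) k)
       = (1 - x ^ Suc n) * (\<Sum>k\<le>n. (-1) ^ k * qbin x n k)"
proof -
  define G where "G n = (\<Sum>k\<le>n. (-1) ^ k * qbin x n k)" for n
  define H where "H n = (\<Sum>k\<le>n. (-1) ^ k * x ^ k * qbin x n k)" for n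
  have "G (Suc (Suc n)) = 1 + (\<Sum>k\<le>Suc n. (-1) ^ Suc k * qbin x (Suc (Suc n)) (Suc k))"
    unfolding G_def by (subst sum.atMost_Suc_shift) (simp add: x del: power_Suc sum.atMost_Suc)
  also have "\<dots> = (1 + (\<Sum>k\<le>Suc n. (-1) ^ Suc k * x ^ Suc k * qbin x (Suc n) (Suc k)))
         - G (Suc n)"
  proof -
    have "(\<Sum>k\<le>Suc n. (-1) ^ Suc k * qbin x (Suc (Suc n)) (Suc k))
       = (\<Sum>k\<le>Suc n. (-1) ^ Suc k * x ^ Suc k * qbin x (Suc n) (Suc k) - (-1) ^ k * qbin x (Suc n) k)"
    proof (rule sum.cong)
      fix k
      show "(-1) ^ Suc k * qbin x (Suc (Suc n)) (Suc k) =
        (-1) ^ Suc k * x ^ Suc k * qbin x (Suc n) (Suc k) - (-1) ^ k * qbin x (Suc n) k"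
        unfolding pascalA[OF x, of "Suc n" k] by (simp add: algebra_simps)
    qed simp
    then show ?thesis unfolding G_def sum_subtractf by simp
  qed
  also have "1 + (\<Sum>k\<le>Suc n. (-1) ^ Suc k * x ^ Suc k * qbin x (Suc n) (Suc k)) = H (Suc n)"
  proof -
    have "(\<Sum>k\<le>Suc (Suc n). (-1) ^ k * x ^ k * qbin x (Suc n) k)
       = 1 + (\<Sum>k\<le>Suc n. (-1) ^ Suc k * x ^ Suc k * qbin x (Suc n) (Suc k))"
      by (subst sum.atMost_Suc_shift) (simp add: x del: power_Suc sum.atMost_Suc)
    moreover have "(\<Sum>k\<le>Suc (Suc n). (-1) ^ k * x ^ k * qbin x (Suc n) k) = H (Suc n)"
      unfolding H_def by (subst sum.atMost_Suc) simp
    ultimately show ?thesis by simp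
  qed
  also have "H (Suc n) - G (Suc n) = - (\<Sum>k\<le>Suc n. (-1) ^ k * (1 - x ^ k) * qbin x (Suc n) k)"
    unfolding H_def G_def sum_negf[symmetric] sum_subtractf[symmetric]
    by (rule sum.cong) (simp_all add: algebra_simps)
  also have "(\<Sum>k\<le>Suc n. (-1) ^ k * (1 - x ^ k) * qbin x (Suc n) k)
      = (\<Sum>k\<le>n. (-1) ^ Suc k * ((1 - x ^ Suc k) * qbin x (Suc n) (Suc k)))"
    by (subst sum.atMost_Suc_shift) (simp del: power_Suc sum.atMost_Suc add: mult.assoc)
  also have "\<dots> = - ((1 - x ^ Suc n) * G n)"
    unfolding qbin_fact[OF x] G_def sum_distrib_left sum_negf[symmetric]
    by (rule sum.cong) (simp_all add: algebra_simps)
  finally show ?thesis unfolding G_def by simp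
qed

lemma gauss_even:
  assumes x: "norm x < 1"
  shows "(\<Sum>k\<le>2 * N. (-1) ^ k * qbin x (2 * N) k) = (\<Prod>i<N. 1 - x ^ (2 * i + 1))"
proof (induction N)
  case 0
  then show ?case using x by simp
next
  case (Suc N)
  have "2 * Suc N = Suc (Suc (2 * N))" by simp
  then show ?case using gauss_step[OF x, of "2 * N"] Suc.IH by (simp del: power_Suc)
qed

lemma Pc_even: "Pc x (2 * N) = (\<Prod>i<N. 1 - x ^ (2 * i + 1)) * Pc (x ^ 2) N"
proof (induction N)
  case 0
  then show ?case by simp
next
  case (Suc N)
  have "2 * Suc N = Suc (Suc (2 * N))" by simp
  then show ?case using Suc.IH
    by (simp add: Pc_Suc power_mult[symmetric] algebra_simps del: power_Suc)
qed

lemma gauss_div: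
  assumes x: "norm x < 1"
  shows "(\<Sum>k\<le>2 * N. (-1) ^ k / (Pc x k * Pc x (2 * N - k))) = 1 / Pc (x ^ 2) N"
proof -
  have x2: "norm (x ^ 2) < 1" using x by (simp add: norm_power power_less_one_iff)
  have "(\<Sum>k\<le>2 * N. (-1) ^ k * qbin x (2 * N) k)
     = Pc x (2 * N) * (\<Sum>k\<le>2 * N. (-1) ^ k / (Pc x k * Pc x (2 * N - k)))"
    unfolding sum_distrib_left by (rule sum.cong) (auto simp: qbin_def)
  then have "(\<Prod>i<N. 1 - x ^ (2 * i + 1)) * Pc (x ^ 2) N * (\<Sum>k\<le>2 * N. (-1) ^ k / (Pc x k * Pc x (2 * N - k)))
       = (\<Prod>i<N. 1 - x ^ (2 * i + 1))"
    using gauss_even[OF x, of N] Pc_even[of x N] by simp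
  moreover have "(\<Prod>i<N. 1 - x ^ (2 * i + 1)) \<noteq> 0"
    using Pc_nz[OF x, of "2*N"] Pc_even[of x N] by auto
  moreover have "Pc (x ^ 2) N \<noteq> 0" using Pc_nz[OF x2] .
  ultimately show ?thesis by (simp add: field_simps)
qed



lemma tele:
  assumes x: "norm x < 1"
  shows "j + d = N \<Longrightarrow> (\<Sum>r\<in>{j..N}. x ^ (r * r - j * j) * (1 - x ^ (2 * r + 1)) / (Pc x (N - r) * Pc x (Suc (N + r))))
     = 1 / (Pc x (N - j) * Pc x (N + j))"
proof (induction d arbitrary: j)
  case 0
  then have j: "j = N" by simp
  have nz: "Pc x (N + N) \<noteq> 0" using Pc_nz[OF x] .
  have a1: "1 - x ^ Suc (N + N) \<noteq> 0" using pow_ne1[OF x] by (auto simp del: power_Suc)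
  show ?case using j nz a1 by (simp add: Pc_Suc mult_2 del: power_Suc)
next
  case (Suc d)
  have jN: "j < N" using Suc.prems by simp
  have split: "{j..N} = insert j {Suc j..N}" using jN by auto
  have IH: "(\<Sum>r\<in>{Suc j..N}. x ^ (r * r - Suc j * Suc j) * (1 - x ^ (2 * r + 1)) / (Pc x (N - r) * Pc x (Suc (N + r))))
     = 1 / (Pc x (N - Suc j) * Pc x (N + Suc j))"
    using Suc.IH[of "Suc j"] Suc.prems by simp
  have sh: "(\<Sum>r\<in>{Suc j..N}. x ^ (r * r - j * j) * (1 - x ^ (2 * r + 1)) / (Pc x (N - r) * Pc x (Suc (N + r))))
    = x ^ (2 * j + 1) * (\<Sum>r\<in>{Suc j..N}. x ^ (r * r - Suc j * Suc j) * (1 - x ^ (2 * r + 1)) / (Pc x (N - r) * Pc x (Suc (N + r))))"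
    unfolding sum_distrib_left
  proof (rule sum.cong)
    fix r assume "r \<in> {Suc j..N}"
    then have "Suc j \<le> r" by simp
    then have "Suc j * Suc j \<le> r * r" using mult_le_mono by blast
    then have "r * r - j * j = (2 * j + 1) + (r * r - Suc j * Suc j)" by simp
    then have p: "x ^ (r * r - j * j) = x ^ (2 * j + 1) * x ^ (r * r - Suc j * Suc j)"
      by (metis power_add)
    show "x ^ (r * r - j * j) * (1 - x ^ (2 * r + 1)) / (Pc x (N - r) * Pc x (Suc (N + r))) =
         x ^ (2 * j + 1) * (x ^ (r * r - Suc j * Suc j) * (1 - x ^ (2 * r + 1)) / (Pc x (N - r) * Pc x (Suc (N + r))))"
      by (simp only: p mult.assoc times_divide_eq_right)
  qed simp
  have N: "N = Suc (j + d)" using Suc.prems by simp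
  define A where "A = Pc x d"
  define B where "B = Pc x (N + j)"
  define v where "v = x ^ Suc d"
  define u where "u = x ^ (2 * j + 1)"
  have e1: "Pc x (N - j) = A * (1 - v)" unfolding A_def v_def N
    by (simp add: Suc_diff_le Pc_Suc del: power_Suc)
  have "Suc (N + j) = (2 * j + 1) + Suc d" using N by simp
  then have uv: "x ^ Suc (N + j) = u * v" unfolding u_def v_def by (metis power_add)
  have e2: "Pc x (Suc (N + j)) = B * (1 - u * v)" unfolding B_def
    by (simp only: Pc_Suc uv)
  have e3: "Pc x (N - Suc j) = A" "Pc x (N + Suc j) = B * (1 - u * v)"
    using e2 by (simp_all add: A_def N)
  have nz: "A \<noteq> 0" "B \<noteq> 0" "1 - v \<noteq> 0" "1 - u * v \<noteq> 0"
    using Pc_nz[OF x] e1 e2 by (auto simp: A_def B_def)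
  have g: "(1 - u) / (A * V * (B * W)) + u * (1 / (A * (B * W))) = 1 / (A * V * B)"
    if "A \<noteq> 0" "B \<noteq> 0" "V \<noteq> 0" "W \<noteq> 0" "W = 1 - u * (1 - V)" for V W
  proof -
    have "(1 - u) / (A * V * (B * W)) + u * (1 / (A * (B * W))) = ((1 - u) + u * V) / (A * V * (B * W))"
      using that(1-4) by (simp add: field_simps)
    also have "(1 - u) + u * V = W" using that(5) by (simp add: algebra_simps)
    finally show ?thesis using that(1-4) by simp
  qed
  define F where "F r = x ^ (r * r - j * j) * (1 - x ^ (2 * r + 1)) / (Pc x (N - r) * Pc x (Suc (N + r)))" for r
  have "(\<Sum>r\<in>{j..N}. F r) = F j + (\<Sum>r\<in>{Suc j..N}. F r)"
    unfolding split by (subst sum.insert) auto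
  also have "(\<Sum>r\<in>{Suc j..N}. F r) = u * (1 / (A * (B * (1 - u * v))))"
    unfolding F_def sh IH e3 u_def ..
  also have "F j = (1 - u) / (A * (1 - v) * (B * (1 - u * v)))"
    unfolding F_def e1 e2 u_def by simp
  also have "(1 - u) / (A * (1 - v) * (B * (1 - u * v))) + u * (1 / (A * (B * (1 - u * v))))
      = 1 / (A * (1 - v) * B)"
    by (rule g) (use nz in auto)
  also have "\<dots> = 1 / (Pc x (N - j) * Pc x (N + j))" unfolding e1 B_def ..
  finally show ?case unfolding F_def .
qed

definition alpha :: "complex \<Rightarrow> nat \<Rightarrow> complex" where
  "alpha x m = (1 - x ^ (2 * m + 1)) *
     ((\<Sum>j\<le>m. (-1) ^ j * x ^ (m * m - j * j)) + (\<Sum>j\<in>{1..m}. (-1) ^ j * x ^ (m * m - j * j)))"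

lemma swap_tri: "(\<Sum>r\<le>(N::nat). \<Sum>j\<le>r. f r j) = (\<Sum>j\<le>N. \<Sum>r\<in>{j..N}. (f r j :: complex))"
proof (induction N)
  case 0
  then show ?case by simp
next
  case (Suc N)
  have "(\<Sum>j\<le>Suc N. \<Sum>r\<in>{j..Suc N}. f r j) = (\<Sum>j\<le>N. \<Sum>r\<in>{j..Suc N}. f r j) + f (Suc N) (Suc N)"
    by simp
  also have "(\<Sum>j\<le>N. \<Sum>r\<in>{j..Suc N}. f r j) = (\<Sum>j\<le>N. (\<Sum>r\<in>{j..N}. f r j) + f (Suc N) j)"
    by (rule sum.cong) (auto simp: atLeastAtMostSuc_conv add.commute)
  finally show ?case using Suc.IH by (simp add: sum.distrib)
qed

lemma sum_1_conv: "(\<Sum>j\<in>{1..(r::nat)}. h j) = (\<Sum>j\<le>r. if j = 0 then 0 else (h j :: complex))"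
  by (induction r) (auto simp: atLeastAtMostSuc_conv)

lemma neg1_diff: "j \<le> N \<Longrightarrow> (-1::complex) ^ (N - j) = (-1) ^ N * (-1) ^ j"
proof -
  assume "j \<le> N"
  then have "(-1::complex) ^ N = (-1) ^ (N - j) * (-1) ^ j" by (metis le_add_diff_inverse2 power_add)
  then have "(-1::complex) ^ N * (-1) ^ j = (-1) ^ (N - j) * ((-1) ^ j * (-1) ^ j)" by simp
  also have "(-1::complex) ^ j * (-1) ^ j = 1" by (simp flip: power_add)
  finally show ?thesis by simp
qed

lemma beta_rel:
  assumes x: "norm x < 1"
  shows "(\<Sum>r\<le>N. alpha x r / (Pc x (N - r) * Pc x (Suc (N + r)))) = (-1) ^ N / Pc (x ^ 2) N"
proof -
  define g where "g r j = (-1) ^ j * (x ^ (r * r - j * j) * (1 - x ^ (2 * r + 1)) / (Pc x (N - r) * Pc x (Suc (N + r))))" for r j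
  define c where "c j = (-1) ^ j / (Pc x (N - j) * Pc x (N + j))" for j
  have gc: "(\<Sum>r\<in>{j..N}. g r j) = c j" if "j \<le> N" for j
  proof -
    have "(\<Sum>r\<in>{j..N}. g r j) = (-1) ^ j * (\<Sum>r\<in>{j..N}. x ^ (r * r - j * j) * (1 - x ^ (2 * r + 1)) / (Pc x (N - r) * Pc x (Suc (N + r))))"
      unfolding g_def sum_distrib_left ..
    also have "\<dots> = (-1) ^ j * (1 / (Pc x (N - j) * Pc x (N + j)))"
      by (subst tele[OF x, of j "N - j" N]) (use that in auto)
    also have "\<dots> = c j" unfolding c_def by simp
    finally show ?thesis .
  qed
  have eqr: "alpha x r / (Pc x (N - r) * Pc x (Suc (N + r))) =
       (\<Sum>j\<le>r. g r j) + (\<Sum>j\<le>r. if j = 0 then 0 else g r j)" for r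
  proof -
    have "alpha x r / (Pc x (N - r) * Pc x (Suc (N + r))) =
       (\<Sum>j\<le>r. (1 - x ^ (2 * r + 1)) * ((-1) ^ j * x ^ (r * r - j * j)) / (Pc x (N - r) * Pc x (Suc (N + r)))) +
       (\<Sum>j\<le>r. (1 - x ^ (2 * r + 1)) * (if j = 0 then 0 else (-1) ^ j * x ^ (r * r - j * j)) / (Pc x (N - r) * Pc x (Suc (N + r))))"
      unfolding alpha_def sum_1_conv[of _ r] distrib_left sum_distrib_left add_divide_distrib
        sum_divide_distrib ..
    also have "\<dots> = (\<Sum>j\<le>r. g r j) + (\<Sum>j\<le>r. if j = 0 then 0 else g r j)"
      unfolding g_def by (intro arg_cong2[where f="(+)"] sum.cong) (auto simp: field_simps)
    finally show "alpha x r / (Pc x (N - r) * Pc x (Suc (N + r))) =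
       (\<Sum>j\<le>r. g r j) + (\<Sum>j\<le>r. if j = 0 then 0 else g r j)" .
  qed
  have "(\<Sum>r\<le>N. alpha x r / (Pc x (N - r) * Pc x (Suc (N + r))))
      = (\<Sum>r\<le>N. \<Sum>j\<le>r. g r j) + (\<Sum>r\<le>N. \<Sum>j\<le>r. if j = 0 then 0 else g r j)"
    by (simp only: eqr sum.distrib)
  also have "\<dots> = (\<Sum>j\<le>N. c j) + (\<Sum>j\<in>{1..N}. c j)"
    unfolding swap_tri sum_1_conv[of c]
    by (intro arg_cong2[where f="(+)"] sum.cong) (auto simp: gc)
  finally have L: "(\<Sum>r\<le>N. alpha x r / (Pc x (N - r) * Pc x (Suc (N + r)))) = (\<Sum>j\<le>N. c j) + (\<Sum>j\<in>{1..N}. c j)" .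
  define h where "h k = (-1) ^ k / (Pc x k * Pc x (2 * N - k))" for k
  have "1 / Pc (x ^ 2) N = (\<Sum>k\<le>2 * N. h k)" unfolding h_def using gauss_div[OF x, of N] by simp
  also have "\<dots> = (\<Sum>k\<in>{0..N}. h k) + (\<Sum>k\<in>{N + 1..N + N}. h k)"
    using sum.ub_add_nat[of 0 N h N] by (simp add: atMost_atLeast0 mult_2)
  also have "(\<Sum>k\<in>{0..N}. h k) = (\<Sum>k\<in>{0..N}. h (N + 0 - k))"
    by (rule sum.atLeastAtMost_rev)
  also have "\<dots> = (-1) ^ N * (\<Sum>j\<le>N. c j)"
    unfolding sum_distrib_left atMost_atLeast0
    by (rule sum.cong) (auto simp: h_def c_def neg1_diff)
  also have "(\<Sum>k\<in>{N + 1..N + N}. h k) = (\<Sum>k\<in>{1..N}. h (k + N))"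
    using sum.shift_bounds_cl_nat_ivl[of h 1 N N] by (simp add: add.commute)
  also have "\<dots> = (-1) ^ N * (\<Sum>j\<in>{1..N}. c j)"
    unfolding sum_distrib_left
    by (rule sum.cong) (auto simp: h_def c_def power_add add.commute ac_simps)
  finally have "1 / Pc (x ^ 2) N = (-1) ^ N * ((\<Sum>j\<le>N. c j) + (\<Sum>j\<in>{1..N}. c j))"
    by (simp add: distrib_left)
  then have "(-1) ^ N * (1 / Pc (x ^ 2) N) = ((-1) ^ N * (-1) ^ N) * ((\<Sum>j\<le>N. c j) + (\<Sum>j\<in>{1..N}. c j))"
    by simp
  also have "(-1::complex) ^ N * (-1) ^ N = 1" by (simp flip: power_add)
  finally show ?thesis using L by simp
qed



definition Pinf :: "complex \<Rightarrow> complex" where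
  "Pinf x = prodinf (\<lambda>i. 1 - x ^ Suc i)"

lemma Pinf_lim: "norm x < 1 \<Longrightarrow> Pc x \<longlonglongrightarrow> Pinf x"
  unfolding Pinf_def by (rule Pc_conv(1))

lemma Pinf_nz: "norm x < 1 \<Longrightarrow> Pinf x \<noteq> 0"
  unfolding Pinf_def by (rule Pc_conv(2))

lemma Pc_shift_lim: "norm x < 1 \<Longrightarrow> (\<lambda>N. Pc x (N - k)) \<longlonglongrightarrow> Pinf x"
  using filterlim_compose[OF Pinf_lim filterlim_minus_const_nat_at_top] by (simp add: o_def)

lemma Pc_shift_lim': "norm x < 1 \<Longrightarrow> (\<lambda>N. Pc x (m + N)) \<longlonglongrightarrow> Pinf x"
  using LIMSEQ_ignore_initial_segment[OF Pinf_lim, of x m] by (simp add: add.commute)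

lemma tannery_conv:
  assumes x: "norm x < 1"
    and fin: "\<And>N. (\<Sum>k\<le>N. c k / Pc x (N - k)) = R N"
    and R: "R \<longlonglongrightarrow> Rl"
    and sc: "summable (\<lambda>k. norm (c k))"
  shows "(\<lambda>k. c k / Pinf x) sums Rl"
proof -
  obtain L where L: "L > 0" "\<And>n. L \<le> norm (Pc x n)" using Pc_lower[OF x] by blast
  define a where "a k N = (if k \<le> N then c k / Pc x (N - k) else 0)" for k N
  have lim: "(\<lambda>N. a k N) \<longlonglongrightarrow> c k / Pinf x" for k
  proof -
    have "(\<lambda>N. c k / Pc x (N - k)) \<longlonglongrightarrow> c k / Pinf x"
      by (intro tendsto_intros Pc_shift_lim x Pinf_nz)
    moreover have "eventually (\<lambda>N. c k / Pc x (N - k) = a k N) sequentially"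
      using eventually_ge_at_top[of k] by eventually_elim (simp add: a_def)
    ultimately show ?thesis using Lim_transform_eventually by blast
  qed
  have bnd: "norm (a k N) \<le> norm (c k) / L" for k N
  proof (cases "k \<le> N")
    case True
    have "norm (c k / Pc x (N - k)) = norm (c k) / norm (Pc x (N - k))" by (simp add: norm_divide)
    also have "\<dots> \<le> norm (c k) / L"
    proof (rule divide_left_mono)
      have "0 < norm (Pc x (N-k))" using L(1) L(2)[of "N-k"] by linarith
      then show "0 < norm (Pc x (N - k)) * L" using L(1) by simp
    qed (use L in auto)
    finally show ?thesis using True by (simp add: a_def)
  next
    case False
    then show ?thesis using L by (simp add: a_def)
  qed
  have T: "((\<lambda>N. suminf (\<lambda>k. a k N)) \<longlongrightarrow> suminf (\<lambda>k. c k / Pinf x)) sequentially"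
    and sb: "summable (\<lambda>k. norm (c k / Pinf x))"
    using tannerys_theorem[of a "\<lambda>k. c k / Pinf x" sequentially "\<lambda>k. norm (c k) / L", OF lim]
      bnd sc by (auto intro: always_eventually summable_divide)
  have "suminf (\<lambda>k. a k N) = R N" for N
  proof -
    have "suminf (\<lambda>k. a k N) = (\<Sum>k\<in>{..N}. a k N)"
      by (rule suminf_finite) (auto simp: a_def)
    also have "\<dots> = R N" unfolding fin[symmetric] by (rule sum.cong) (auto simp: a_def)
    finally show ?thesis .
  qed
  with T have "R \<longlonglongrightarrow> suminf (\<lambda>k. c k / Pinf x)" by simp
  then have Rl: "Rl = suminf (\<lambda>k. c k / Pinf x)" by (rule LIMSEQ_unique[OF R])
  have "summable (\<lambda>k. c k / Pinf x)" by (rule summable_norm_cancel[OF sb])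
  then show ?thesis unfolding Rl by (rule summable_sums)
qed

lemma summable_geo_bound:
  assumes "norm (x::complex) < 1" "\<And>k. norm (c k) \<le> C * norm x ^ k"
  shows "summable (\<lambda>k. norm (c k))"
proof (rule summable_comparison_test)
  show "\<exists>N. \<forall>n\<ge>N. norm (norm (c n)) \<le> C * norm x ^ n" using assms(2) by auto
  show "summable (\<lambda>n. C * norm x ^ n)" using assms(1) by (intro summable_mult summable_geometric) simp
qed

lemma pow_le: "norm (x::complex) < 1 \<Longrightarrow> m \<le> n \<Longrightarrow> norm (x ^ n) \<le> norm x ^ m"
  by (simp add: norm_power power_decreasing)

lemma tri_ge: "k \<le> tri (Suc k)" by (simp add: tri_def)

lemma euler_sum:
  assumes x: "norm x < 1"
  shows "(\<lambda>k. (-1) ^ k * x ^ tri (Suc k) / Pc x k) sums Pinf x"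
proof -
  obtain L where L: "L > 0" "\<And>n. L \<le> norm (Pc x n)" using Pc_lower[OF x] by blast
  have "(\<lambda>k. ((-1) ^ k * x ^ tri (Suc k) / Pc x k) / Pinf x) sums 1"
  proof (rule tannery_conv[OF x _ tendsto_const])
    show "(\<Sum>k\<le>N. (-1) ^ k * x ^ tri (Suc k) / Pc x k / Pc x (N - k)) = 1" for N
      using euler_fin[OF x, of N] by (simp add: field_simps)
    show "summable (\<lambda>k. norm ((-1) ^ k * x ^ tri (Suc k) / Pc x k))"
    proof (rule summable_geo_bound[OF x])
      fix k
      have "norm ((-1) ^ k * x ^ tri (Suc k) / Pc x k) = norm (x ^ tri (Suc k)) / norm (Pc x k)"
        by (simp add: norm_divide norm_mult norm_power)
      also have "\<dots> \<le> norm x ^ k / L"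
        by (intro frac_le pow_le x tri_ge L) auto
      finally show "norm ((-1) ^ k * x ^ tri (Suc k) / Pc x k) \<le> (1 / L) * norm x ^ k" by simp
    qed
  qed
  then have "(\<lambda>k. ((-1) ^ k * x ^ tri (Suc k) / Pc x k) / Pinf x * Pinf x) sums (1 * Pinf x)"
    by (rule sums_mult2)
  then show ?thesis using Pinf_nz[OF x] by simp
qed

lemma durfee_sum:
  assumes x: "norm x < 1"
  shows "(\<lambda>k. x ^ (k * k + m * k) / (Pc x k * Pc x (m + k))) sums (1 / Pinf x)"
proof -
  obtain L where L: "L > 0" "\<And>n. L \<le> norm (Pc x n)" using Pc_lower[OF x] by blast
  have "(\<lambda>k. (x ^ (k * k + m * k) / (Pc x k * Pc x (m + k))) / Pinf x) sums (1 / (Pinf x * Pinf x))"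
  proof (rule tannery_conv[OF x])
    show "(\<Sum>k\<le>N. x ^ (k * k + m * k) / (Pc x k * Pc x (m + k)) / Pc x (N - k)) = 1 / (Pc x N * Pc x (m + N))" for N
    proof -
      have "(\<Sum>k\<le>N. qbin x N k * (x ^ (k * k + m * k) / Pc x (m + k)))
          = Pc x N * (\<Sum>k\<le>N. x ^ (k * k + m * k) / (Pc x k * Pc x (m + k)) / Pc x (N - k))"
        unfolding sum_distrib_left by (rule sum.cong) (auto simp: qbin_def)
      moreover have "S = 1 / (P * Q)" if "P \<noteq> 0" "P * S = 1 / Q" for P Q S :: complex
      proof -
        have "S = (P * S) / P" using that(1) by simp
        also have "\<dots> = (1 / Q) / P" using that(2) by (simp only:)
        also have "\<dots> = 1 / (P * Q)" by (metis divide_divide_eq_left mult.commute)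
        finally show ?thesis .
      qed
      ultimately show ?thesis using cauchy_fin[OF x, of N m] Pc_nz[OF x, of N] by simp
    qed
    show "(\<lambda>N. 1 / (Pc x N * Pc x (m + N))) \<longlonglongrightarrow> 1 / (Pinf x * Pinf x)"
    proof -
      have "(\<lambda>N. Pc x N * Pc x (m + N)) \<longlonglongrightarrow> Pinf x * Pinf x"
        by (rule tendsto_mult[OF Pinf_lim[OF x] Pc_shift_lim'[OF x]])
      from tendsto_divide[OF tendsto_const this, of 1] show ?thesis using Pinf_nz[OF x] by simp
    qed
    show "summable (\<lambda>k. norm (x ^ (k * k + m * k) / (Pc x k * Pc x (m + k))))"
    proof (rule summable_geo_bound[OF x])
      fix k
      have "norm (x ^ (k * k + m * k) / (Pc x k * Pc x (m + k))) = norm (x ^ (k * k + m * k)) / (norm (Pc x k) * norm (Pc x (m + k)))"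
        by (simp add: norm_divide norm_mult)
      also have "\<dots> \<le> norm x ^ k / (L * L)"
      proof (rule frac_le)
        show "norm (x ^ (k * k + m * k)) \<le> norm x ^ k" by (rule pow_le[OF x]) (cases k, auto)
        show "L * L \<le> norm (Pc x k) * norm (Pc x (m + k))" using L by (intro mult_mono) auto
      qed (use L in auto)
      finally show "norm (x ^ (k * k + m * k) / (Pc x k * Pc x (m + k))) \<le> (1 / (L * L)) * norm x ^ k" by simp
    qed
  qed
  then have "(\<lambda>k. (x ^ (k * k + m * k) / (Pc x k * Pc x (m + k))) / Pinf x * Pinf x) sums (1 / (Pinf x * Pinf x) * Pinf x)"
    by (rule sums_mult2)
  then show ?thesis using Pinf_nz[OF x] by simp
qed



lemma two_choose2: "2 * choose2 k = k * (k - 1)"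
proof -
  have "even (k * (k - 1))" by auto
  then show ?thesis unfolding choose2_def by simp
qed

lemma tform:
  fixes q :: complex
  assumes q: "q \<noteq> 0"
  shows "(-1) powi (r + s) * (q ^ 2) powi r * q powi s *
           q powi (int 2 * choose2 r + int 2 * r * s + int 1 * choose2 s)
       = (-1) powi (r + s) * q powi (2 * r + s + 2 * choose2 r + 2 * r * s + choose2 s)"
proof -
  have "(q ^ 2) powi r = q powi (int 2 * r)" by (rule power_int_power)
  moreover have "q powi (2 * r + s + 2 * choose2 r + 2 * r * s + choose2 s)
     = q powi (2 * r) * q powi s * q powi (2 * choose2 r + 2 * r * s + choose2 s)"
    using q by (simp add: power_int_add[symmetric] add.assoc)
  ultimately show ?thesis by (simp add: mult.assoc)
qed

definition uu :: "complex \<Rightarrow> nat \<times> nat \<times> nat \<Rightarrow> complex" where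
  "uu q i = (case i of (m, j, e) \<Rightarrow> (-1) ^ (j + e) * q ^ (m * m + m + (m * m - j * j) + e * (2 * m + 1)))"

lemma expo_A:
  assumes "j + d = m" "e < 2"
  shows "2 * int j + int (2 * d + e) + 2 * choose2 (int j) + 2 * int j * int (2 * d + e) + choose2 (int (2 * d + e))
       = int (m * m + m + (m * m - j * j) + e * (2 * m + 1))"
proof -
  have mm: "m * m - j * j = 2 * j * d + d * d" using assms(1) by (auto simp: algebra_simps)
  have T: "int (m * m + m + (m * m - j * j) + e * (2 * m + 1)) =
     (int j + int d) * (int j + int d) + (int j + int d) + (2 * int j * int d + int d * int d) + int e * (2 * (int j + int d) + 1)"
    using assms(1) unfolding mm by (auto simp: algebra_simps)
  have ee: "int e * int e = int e" using assms(2) by (cases e) auto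
  have c1: "2 * choose2 (int j) = int j * (int j - 1)" by (rule two_choose2)
  have c2: "2 * choose2 (int (2 * d + e)) = (2 * int d + int e) * ((2 * int d + int e) - 1)"
    using two_choose2[of "int (2 * d + e)"] by simp
  have "2 * int j + (2 * int d + int e) + 2 * choose2 (int j) + 2 * int j * (2 * int d + int e) + choose2 (int (2 * d + e))
     = (int j + int d) * (int j + int d) + (int j + int d) + (2 * int j * int d + int d * int d) + int e * (2 * (int j + int d) + 1)"
    using c1 c2 ee by algebra
  then show ?thesis unfolding T by simp
qed

lemma expo_B:
  assumes "j + d = m" "e < 2"
  shows "2 * (- int j) + (- int (2 * d + e + 1)) + 2 * choose2 (- int j) + 2 * (- int j) * (- int (2 * d + e + 1)) + choose2 (- int (2 * d + e + 1))
       = int (m * m + m + (m * m - j * j) + e * (2 * m + 1))"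
proof -
  have mm: "m * m - j * j = 2 * j * d + d * d" using assms(1) by (auto simp: algebra_simps)
  have T: "int (m * m + m + (m * m - j * j) + e * (2 * m + 1)) =
     (int j + int d) * (int j + int d) + (int j + int d) + (2 * int j * int d + int d * int d) + int e * (2 * (int j + int d) + 1)"
    using assms(1) unfolding mm by (auto simp: algebra_simps)
  have ee: "int e * int e = int e" using assms(2) by (cases e) auto
  have c1: "2 * choose2 (- int j) = (- int j) * (- int j - 1)" by (rule two_choose2)
  have c2: "2 * choose2 (- int (2 * d + e + 1)) = (- (2 * int d + int e + 1)) * ((- (2 * int d + int e + 1)) - 1)"
    using two_choose2[of "- int (2 * d + e + 1)"] by simp
  have "2 * (- int j) + (- (2 * int d + int e + 1)) + 2 * choose2 (- int j) + 2 * (- int j) * (- (2 * int d + int e + 1)) + choose2 (- int (2 * d + e + 1))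
     = (int j + int d) * (int j + int d) + (int j + int d) + (2 * int j * int d + int d * int d) + int e * (2 * (int j + int d) + 1)"
    using c1 c2 ee by algebra
  then show ?thesis unfolding T by simp
qed

definition tt :: "complex \<Rightarrow> int \<times> int \<Rightarrow> complex" where
  "tt q = (\<lambda>(r::int, s::int). (-1) powi (r + s) * (q ^ 2) powi r * q powi s *
                 q powi (int 2 * choose2 r + int 2 * r * s + int 1 * choose2 s))"

lemma hecke_tt: "hecke_f 2 2 1 (q ^ 2) q q = infsum (tt q) {(r, s). r \<ge> 0 \<and> s \<ge> 0} - infsum (tt q) {(r, s). r < 0 \<and> s < 0}"
  unfolding hecke_f_def Let_def tt_def ..

lemma tA:
  assumes q: "q \<noteq> 0" and "j \<le> m" "e < 2"
  shows "tt q (int j, int (2 * (m - j) + e)) = uu q (m, j, e)"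
proof -
  have E: "2 * int j + int (2 * (m - j) + e) + 2 * choose2 (int j) + 2 * int j * int (2 * (m - j) + e) + choose2 (int (2 * (m - j) + e))
       = int (m * m + m + (m * m - j * j) + e * (2 * m + 1))"
    by (rule expo_A) (use assms in auto)
  have S: "int j + int (2 * (m - j) + e) = int (j + e + 2 * (m - j))" by simp
  have sg: "(-1::complex) ^ (j + e + 2 * (m - j)) = (-1) ^ (j + e)"
    by (simp add: power_add power_mult)
  show ?thesis
    unfolding tt_def split tform[OF q] E S power_int_of_nat sg uu_def by simp
qed

lemma tB:
  assumes q: "q \<noteq> 0" and "j \<le> m" "e < 2"
  shows "tt q (- int j, - int (2 * (m - j) + e + 1)) = - uu q (m, j, e)"
proof -
  have E: "2 * (- int j) + (- int (2 * (m - j) + e + 1)) + 2 * choose2 (- int j) + 2 * (- int j) * (- int (2 * (m - j) + e + 1)) + choose2 (- int (2 * (m - j) + e + 1))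
       = int (m * m + m + (m * m - j * j) + e * (2 * m + 1))"
    by (rule expo_B) (use assms in auto)
  have S: "- int j + - int (2 * (m - j) + e + 1) = - int (Suc (j + e + 2 * (m - j)))" by simp
  have m1: "(-1::complex) powi (- int n) = (-1) ^ n" for n :: nat
  proof -
    have "(-1::complex) ^ n * (-1) ^ n = 1" by (simp flip: power_add)
    then have "inverse ((-1::complex) ^ n) = (-1) ^ n" by (metis inverse_unique)
    then show ?thesis by (simp add: power_int_minus)
  qed
  have sg: "(-1::complex) powi (- int (Suc (j + e + 2 * (m - j)))) = - ((-1) ^ (j + e))"
    unfolding m1 by (simp add: power_add power_mult)
  show ?thesis
    unfolding tt_def split tform[OF q] E S power_int_of_nat sg uu_def by simp
qed

lemma sig_has_sum_both:
  fixes f :: "nat \<times> 'b \<Rightarrow> complex"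
  assumes q: "norm (q::complex) < 1"
    and fin: "\<And>m. finite (F m)" and card: "\<And>m. card (F m) \<le> 2 * Suc m"
    and bnd: "\<And>m p. p \<in> F m \<Longrightarrow> norm (f (m, p)) \<le> norm q ^ m"
  shows "((\<lambda>m. \<Sum>p\<in>F m. f (m, p)) has_sum infsum f (Sigma UNIV F)) UNIV \<and> (f has_sum infsum f (Sigma UNIV F)) (Sigma UNIV F)"
proof -
  define t where "t = norm q"
  have t: "0 \<le> t" "t < 1" using q by (auto simp: t_def)
  define G where "G = (\<lambda>(m::nat, p::'b). t ^ m)"
  have inner: "((\<lambda>p. G (m, p)) has_sum (real (card (F m)) * t ^ m)) (F m)" for m
    by (rule has_sum_finiteI[OF fin]) (simp add: G_def)
  have "summable (\<lambda>m. real (card (F m)) * t ^ m)"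
  proof (rule summable_comparison_test)
    have "(\<lambda>n. of_nat (Suc n) * t ^ n) sums (1 / (1 - t)^2)"
      by (rule geometric_deriv_sums) (use t in auto)
    then show "summable (\<lambda>n. 2 * (of_nat (Suc n) * t ^ n))" by (intro summable_mult sums_summable)
    show "\<exists>N. \<forall>n\<ge>N. norm (real (card (F n)) * t ^ n) \<le> 2 * (of_nat (Suc n) * t ^ n)"
    proof (intro exI allI impI)
      fix n :: nat
      have "real (card (F n)) \<le> 2 * of_nat (Suc n)" using card[of n] by linarith
      then have "real (card (F n)) * t ^ n \<le> (2 * of_nat (Suc n)) * t ^ n"
        by (rule mult_right_mono) (use t in simp)
      then show "norm (real (card (F n)) * t ^ n) \<le> 2 * (of_nat (Suc n) * t ^ n)"
        using t by (simp add: abs_mult algebra_simps)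
    qed
  qed
  then have outer: "(\<lambda>m. real (card (F m)) * t ^ m) summable_on UNIV"
    using t by (intro norm_summable_imp_summable_on) (simp add: abs_mult)
  have Gs: "G summable_on Sigma UNIV F"
    by (rule summable_on_SigmaI[OF inner outer]) (use t in \<open>auto simp: G_def\<close>)
  have "(\<lambda>x. norm (f x)) summable_on Sigma UNIV F"
    by (rule Infinite_Sum.abs_summable_on_comparison_test'[OF Gs]) (use bnd in \<open>auto simp: G_def t_def\<close>)
  then have "f summable_on Sigma UNIV F" by (rule Infinite_Sum.abs_summable_summable)
  then have hs: "(f has_sum infsum f (Sigma UNIV F)) (Sigma UNIV F)" by simp
  then have "((\<lambda>m. \<Sum>p\<in>F m. f (m, p)) has_sum infsum f (Sigma UNIV F)) UNIV"
    by (rule has_sum_Sigma'[where b="\<lambda>m. \<Sum>p\<in>F m. f (m, p)"]) (auto intro: has_sum_finiteI fin)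
  with hs show ?thesis by blast
qed

lemma uu_bound:
  assumes q: "norm q < 1"
  shows "norm (uu q (m, j, e)) \<le> norm q ^ m"
proof -
  have "norm (uu q (m, j, e)) = norm q ^ (m * m + m + (m * m - j * j) + e * (2 * m + 1))"
    by (simp add: uu_def norm_mult norm_power)
  also have "\<dots> \<le> norm q ^ m" using q by (intro power_decreasing) auto
  finally show ?thesis .
qed

lemma uu_pair: "uu q (m, j, 0) + uu q (m, j, 1) = (-1) ^ j * q ^ (m * m + m) * ((1 - q ^ (2 * m + 1)) * q ^ (m * m - j * j))"
  by (simp add: uu_def power_add algebra_simps power_mult power2_eq_square)

lemma hecke_series:
  assumes q1: "norm q < 1" and q0: "q \<noteq> 0"
  shows "((\<lambda>m. q ^ (m * m + m) * alpha q m) has_sum hecke_f 2 2 1 (q ^ 2) q q) UNIV"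
proof -
  define FA where "FA m = {..m} \<times> {..<2::nat}" for m :: nat
  define FB where "FB m = {1..m} \<times> {..<2::nat}" for m :: nat
  define XA where "XA = infsum (uu q) (Sigma UNIV FA)"
  define XB where "XB = infsum (uu q) (Sigma UNIV FB)"
  have hA: "((\<lambda>m. \<Sum>p\<in>FA m. uu q (m, p)) has_sum XA) UNIV \<and> (uu q has_sum XA) (Sigma UNIV FA)"
    unfolding XA_def by (rule sig_has_sum_both[OF q1]) (auto simp: FA_def uu_bound[OF q1])
  have hB: "((\<lambda>m. \<Sum>p\<in>FB m. uu q (m, p)) has_sum XB) UNIV \<and> (uu q has_sum XB) (Sigma UNIV FB)"
    unfolding XB_def by (rule sig_has_sum_both[OF q1]) (auto simp: FB_def uu_bound[OF q1])
  have tA_sum: "(tt q has_sum XA) {(r, s). r \<ge> 0 \<and> s \<ge> 0}"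
  proof -
    have "(uu q has_sum XA) (Sigma UNIV FA) = (tt q has_sum XA) {(r, s). r \<ge> 0 \<and> s \<ge> 0}"
    proof (rule has_sum_reindex_bij_witness[where j="\<lambda>(m, j, e). (int j, int (2 * (m - j) + e))"
          and i="\<lambda>(r, s). (nat r + nat s div 2, nat r, nat s mod 2)"])
      fix a assume "a \<in> Sigma UNIV FA"
      then obtain m j e where a: "a = (m, j, e)" "j \<le> m" "e < 2" by (auto simp: FA_def)
      then show "(\<lambda>(r, s). (nat r + nat s div 2, nat r, nat s mod 2)) ((\<lambda>(m, j, e). (int j, int (2 * (m - j) + e))) a) = a"
        by (simp only: split nat_int) auto
      show "(\<lambda>(m, j, e). (int j, int (2 * (m - j) + e))) a \<in> {(r, s). r \<ge> 0 \<and> s \<ge> 0}" using a by auto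
      show "tt q ((\<lambda>(m, j, e). (int j, int (2 * (m - j) + e))) a) = uu q a" using a tA[OF q0] by simp
    next
      fix b assume "b \<in> {(r::int, s::int). r \<ge> 0 \<and> s \<ge> 0}"
      then obtain r s where b: "b = (r, s)" "r \<ge> 0" "s \<ge> 0" by auto
      have n: "2 * (nat s div 2) + nat s mod 2 = nat s" by simp
      have "2 * int (nat s div 2) + int (nat s mod 2) = int (nat s)"
        using arg_cong[OF n, of int] by (simp only: of_nat_add of_nat_mult of_nat_numeral)
      then have "2 * int (nat s div 2) + int (nat s mod 2) = s" using b by simp
      then show "(\<lambda>(m, j, e). (int j, int (2 * (m - j) + e))) ((\<lambda>(r, s). (nat r + nat s div 2, nat r, nat s mod 2)) b) = b"
        using b by simp
      show "(\<lambda>(r, s). (nat r + nat s div 2, nat r, nat s mod 2)) b \<in> Sigma UNIV FA" using b by (auto simp: FA_def)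
    qed simp
    with hA show ?thesis by blast
  qed
  have tB_sum: "(tt q has_sum - XB) {(r, s). r < 0 \<and> s < 0}"
  proof -
    have "(uu q has_sum XB) (Sigma UNIV FB) = ((\<lambda>p. - tt q p) has_sum XB) {(r, s). r < 0 \<and> s < 0}"
    proof (rule has_sum_reindex_bij_witness[where j="\<lambda>(m, j, e). (- int j, - int (2 * (m - j) + e + 1))"
          and i="\<lambda>(r, s). (nat (-r) + (nat (-s) - 1) div 2, nat (-r), (nat (-s) - 1) mod 2)"])
      fix a assume "a \<in> Sigma UNIV FB"
      then obtain m j e where a: "a = (m, j, e)" "1 \<le> j" "j \<le> m" "e < 2" by (auto simp: FB_def)
      then show "(\<lambda>(r, s). (nat (-r) + (nat (-s) - 1) div 2, nat (-r), (nat (-s) - 1) mod 2)) ((\<lambda>(m, j, e). (- int j, - int (2 * (m - j) + e + 1))) a) = a"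
        by (simp only: split minus_minus nat_int) auto
      show "(\<lambda>(m, j, e). (- int j, - int (2 * (m - j) + e + 1))) a \<in> {(r, s). r < 0 \<and> s < 0}" using a by auto
      show "- tt q ((\<lambda>(m, j, e). (- int j, - int (2 * (m - j) + e + 1))) a) = uu q a" using a tB[OF q0] by simp
    next
      fix b assume "b \<in> {(r::int, s::int). r < 0 \<and> s < 0}"
      then obtain r s where b: "b = (r, s)" "r < 0" "s < 0" by auto
      have n: "2 * ((nat (-s) - 1) div 2) + (nat (-s) - 1) mod 2 + 1 = nat (-s)" using b by simp
      have "2 * int ((nat (-s) - 1) div 2) + int ((nat (-s) - 1) mod 2) + 1 = int (nat (-s))"
        using arg_cong[OF n, of int] by (simp only: of_nat_add of_nat_mult of_nat_numeral of_nat_1)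
      then have "2 * int ((nat (-s) - 1) div 2) + int ((nat (-s) - 1) mod 2) + 1 = - s" using b by simp
      then show "(\<lambda>(m, j, e). (- int j, - int (2 * (m - j) + e + 1))) ((\<lambda>(r, s). (nat (-r) + (nat (-s) - 1) div 2, nat (-r), (nat (-s) - 1) mod 2)) b) = b"
        using b by simp
      show "(\<lambda>(r, s). (nat (-r) + (nat (-s) - 1) div 2, nat (-r), (nat (-s) - 1) mod 2)) b \<in> Sigma UNIV FB" using b by (auto simp: FB_def)
    qed simp
    with hB have "((\<lambda>p. - tt q p) has_sum XB) {(r, s). r < 0 \<and> s < 0}" by blast
    from has_sum_uminus[THEN iffD1, OF this] show ?thesis by simp
  qed
  have H: "hecke_f 2 2 1 (q ^ 2) q q = XA + XB"
    unfolding hecke_tt using infsumI[OF tA_sum] infsumI[OF tB_sum] by simp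
  have "((\<lambda>m. (\<Sum>p\<in>FA m. uu q (m, p)) + (\<Sum>p\<in>FB m. uu q (m, p))) has_sum (XA + XB)) UNIV"
    using hA hB by (intro has_sum_add) auto
  moreover have "(\<Sum>p\<in>FA m. uu q (m, p)) + (\<Sum>p\<in>FB m. uu q (m, p)) = q ^ (m * m + m) * alpha q m" for m
  proof -
    have sA: "(\<Sum>p\<in>FA m. uu q (m, p)) = (\<Sum>j\<le>m. uu q (m, j, 0) + uu q (m, j, 1))"
      unfolding FA_def sum.cartesian_product' by (simp add: numeral_2_eq_2 lessThan_Suc add.commute)
    have sB: "(\<Sum>p\<in>FB m. uu q (m, p)) = (\<Sum>j\<in>{1..m}. uu q (m, j, 0) + uu q (m, j, 1))"
      unfolding FB_def sum.cartesian_product' by (simp add: numeral_2_eq_2 lessThan_Suc add.commute)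
    show ?thesis unfolding sA sB uu_pair alpha_def distrib_left sum_distrib_left
      by (intro arg_cong2[where f="(+)"] sum.cong) (auto simp: algebra_simps)
  qed
  ultimately show ?thesis using H by simp
qed



lemma alpha_bound:
  assumes x: "norm x < 1"
  shows "norm (alpha x m) \<le> 4 * real (Suc m)"
proof -
  have p1: "norm (x ^ n) \<le> 1" for n using x by (simp add: norm_power power_le_one)
  have a: "norm (1 - x ^ (2 * m + 1)) \<le> 2"
    using norm_triangle_ineq4[of 1 "x ^ (2 * m + 1)"] p1[of "2 * m + 1"] by simp
  have b: "norm (\<Sum>j\<le>m. (-1) ^ j * x ^ (m * m - j * j)) \<le> real (Suc m)"
  proof -
    have "norm (\<Sum>j\<le>m. (-1) ^ j * x ^ (m * m - j * j)) \<le> (\<Sum>j\<le>m. norm ((-1) ^ j * x ^ (m * m - j * j)))"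
      by (rule norm_sum)
    also have "\<dots> \<le> (\<Sum>j\<le>m. 1)"
      by (rule sum_mono) (simp add: norm_mult norm_power power_le_one x less_imp_le)
    finally show ?thesis by simp
  qed
  have c: "norm (\<Sum>j\<in>{1..m}. (-1) ^ j * x ^ (m * m - j * j)) \<le> real (Suc m)"
  proof -
    have "norm (\<Sum>j\<in>{1..m}. (-1) ^ j * x ^ (m * m - j * j)) \<le> (\<Sum>j\<in>{1..m}. norm ((-1) ^ j * x ^ (m * m - j * j)))"
      by (rule norm_sum)
    also have "\<dots> \<le> (\<Sum>j\<in>{1..m}. 1)"
      by (rule sum_mono) (simp add: norm_mult norm_power power_le_one x less_imp_le)
    finally show ?thesis by simp
  qed
  have "norm (alpha x m) \<le> 2 * (real (Suc m) + real (Suc m))"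
    unfolding alpha_def norm_mult
    by (rule mult_mono[OF a]) (use b c norm_triangle_ineq[of "\<Sum>j\<le>m. (-1) ^ j * x ^ (m * m - j * j)"
        "\<Sum>j\<in>{1..m}. (-1) ^ j * x ^ (m * m - j * j)"] in auto)
  then show ?thesis by simp
qed

lemma tri2: "2 * tri (Suc N) = N * N + N"
  by (induction N) (auto simp: tri_Suc)

lemma main_series:
  assumes q: "norm q < 1"
  shows "((\<lambda>m. q ^ (m * m + m) * alpha q m) has_sum (Pinf q * Pinf (q ^ 2))) UNIV"
proof -
  have q2: "norm (q ^ 2) < 1" using q by (simp add: norm_power power_less_one_iff)
  define t where "t = norm q"
  have t: "0 \<le> t" "t < 1" using q by (auto simp: t_def)
  obtain L where L: "L > 0" "\<And>n. L \<le> norm (Pc q n)" using Pc_lower[OF q] by blast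
  define J1 where "J1 = Pinf q"
  define J2 where "J2 = Pinf (q ^ 2)"
  have J1nz: "J1 \<noteq> 0" using Pinf_nz[OF q] by (simp add: J1_def)
  define c where "c r k = q ^ (k * k + (2 * r + 1) * k) / (Pc q k * Pc q ((2 * r + 1) + k))" for r k
  define f where "f = (\<lambda>(r, k). q ^ (r * r + r) * alpha q r * c r k)"
  define C where "C = 4 / (L * L)"
  define G where "G = (\<lambda>(r::nat, k::nat). C * (real (Suc r) * t ^ r) * t ^ k)"
  have Cpos: "C \<ge> 0" using L by (simp add: C_def)
  have cb: "norm (c r k) \<le> t ^ k / (L * L)" for r k
  proof -
    have "norm (c r k) = norm (q ^ (k * k + (2 * r + 1) * k)) / (norm (Pc q k) * norm (Pc q ((2 * r + 1) + k)))"
      by (simp add: c_def norm_divide norm_mult)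
    also have "\<dots> \<le> t ^ k / (L * L)"
    proof (rule frac_le)
      show "norm (q ^ (k * k + (2 * r + 1) * k)) \<le> t ^ k" unfolding t_def by (rule pow_le[OF q]) simp
      show "L * L \<le> norm (Pc q k) * norm (Pc q ((2 * r + 1) + k))" using L by (intro mult_mono) auto
    qed (use L t in auto)
    finally show ?thesis .
  qed
  have fb: "norm (f (r, k)) \<le> G (r, k)" for r k
  proof -
    have "norm (f (r, k)) = norm (q ^ (r * r + r)) * norm (alpha q r) * norm (c r k)"
      by (simp add: f_def norm_mult)
    also have "\<dots> \<le> t ^ r * (4 * real (Suc r)) * (t ^ k / (L * L))"
      by (intro mult_mono alpha_bound[OF q] cb) (auto simp: t_def intro: pow_le[OF q])
    also have "\<dots> = G (r, k)" by (simp add: G_def C_def)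
    finally show ?thesis .
  qed
  have Ginner: "((\<lambda>k. G (r, k)) has_sum (C * (real (Suc r) * t ^ r) / (1 - t))) UNIV" for r
  proof -
    have "(\<lambda>k. C * (real (Suc r) * t ^ r) * t ^ k) sums (C * (real (Suc r) * t ^ r) * (1 / (1 - t)))"
      by (intro sums_mult geometric_sums) (use t in auto)
    then show ?thesis unfolding G_def using t Cpos
      by (intro sums_nonneg_imp_has_sum) auto
  qed
  have Gouter: "(\<lambda>r. C * (real (Suc r) * t ^ r) / (1 - t)) summable_on UNIV"
  proof -
    have "(\<lambda>n. of_nat (Suc n) * t ^ n) sums (1 / (1 - t)^2)"
      by (rule geometric_deriv_sums) (use t in auto)
    then have "summable (\<lambda>r. C * (real (Suc r) * t ^ r) / (1 - t))"
      by (intro summable_divide summable_mult sums_summable)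
    then show ?thesis using t Cpos by (intro norm_summable_imp_summable_on) simp
  qed
  have Gs: "G summable_on Sigma UNIV (\<lambda>_. UNIV)"
    by (rule summable_on_SigmaI[OF Ginner Gouter]) (use t Cpos in \<open>auto simp: G_def\<close>)
  have "(\<lambda>x. norm (f x)) summable_on Sigma UNIV (\<lambda>_. UNIV)"
    by (rule Infinite_Sum.abs_summable_on_comparison_test'[OF Gs]) (use fb in auto)
  then have "f summable_on Sigma UNIV (\<lambda>_. UNIV)" by (rule Infinite_Sum.abs_summable_summable)
  then have hf: "(f has_sum infsum f (Sigma UNIV (\<lambda>_. UNIV))) (Sigma UNIV (\<lambda>_. UNIV))" by simp
  define X where "X = infsum f (Sigma UNIV (\<lambda>_. UNIV))"
  have inner1: "((\<lambda>k. f (r, k)) has_sum (q ^ (r * r + r) * alpha q r * (1 / J1))) UNIV" for r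
  proof (rule norm_summable_imp_has_sum)
    show "summable (\<lambda>k. norm (f (r, k)))"
    proof (rule summable_comparison_test)
      show "\<exists>N. \<forall>n\<ge>N. norm (norm (f (r, n))) \<le> G (r, n)" using fb by auto
      show "summable (\<lambda>k. G (r, k))" using Ginner[of r] has_sum_imp_sums sums_summable by blast
    qed
    have "(\<lambda>k. c r k) sums (1 / Pinf q)"
      using durfee_sum[OF q, of "2 * r + 1"] unfolding c_def by simp
    from sums_mult[OF this, of "q ^ (r * r + r) * alpha q r"]
    show "(\<lambda>k. f (r, k)) sums (q ^ (r * r + r) * alpha q r * (1 / J1))"
      unfolding f_def J1_def by simp
  qed
  have S1: "((\<lambda>r. q ^ (r * r + r) * alpha q r * (1 / J1)) has_sum X) UNIV"
    by (rule has_sum_Sigma'[OF hf[folded X_def]]) (rule inner1)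
  have "((\<lambda>p. f ((\<lambda>(N, r). (r, N - r)) p)) has_sum X) (Sigma UNIV (\<lambda>N. {..N})) = (f has_sum X) (Sigma UNIV (\<lambda>_. UNIV))"
    by (rule has_sum_reindex_bij_witness[where i="\<lambda>(r, k). (r + k, r)"]) auto
  then have hf2: "((\<lambda>p. f ((\<lambda>(N, r). (r, N - r)) p)) has_sum X) (Sigma UNIV (\<lambda>N. {..N}))"
    using hf X_def by simp
  have S2: "((\<lambda>N. \<Sum>r\<le>N. f (r, N - r)) has_sum X) UNIV"
    by (rule has_sum_Sigma'[OF hf2]) (auto intro: has_sum_finiteI)
  have eN: "(\<Sum>r\<le>N. f (r, N - r)) = (-1) ^ N * (q ^ 2) ^ tri (Suc N) / Pc (q ^ 2) N" for N
  proof -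
    have "(\<Sum>r\<le>N. f (r, N - r)) = q ^ (N * N + N) * (\<Sum>r\<le>N. alpha q r / (Pc q (N - r) * Pc q (Suc (N + r))))"
      unfolding sum_distrib_left
    proof (rule sum.cong)
      fix r assume "r \<in> {..N}"
      then obtain d where N: "N = r + d" by (metis atMost_iff le_Suc_ex)
      have ex: "r * r + r + ((N - r) * (N - r) + (2 * r + 1) * (N - r)) = N * N + N"
        unfolding N by (simp add: algebra_simps)
      have ix: "2 * r + 1 + (N - r) = Suc (N + r)" unfolding N by simp
      show "f (r, N - r) = q ^ (N * N + N) * (alpha q r / (Pc q (N - r) * Pc q (Suc (N + r))))"
        unfolding f_def c_def split ix ex[symmetric] power_add by (simp add: field_simps)
    qed simp
    also have "\<dots> = q ^ (N * N + N) * ((-1) ^ N / Pc (q ^ 2) N)" unfolding beta_rel[OF q] ..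
    also have "q ^ (N * N + N) = (q ^ 2) ^ tri (Suc N)" by (simp add: power_mult tri2[symmetric])
    finally show ?thesis by simp
  qed
  have "(\<lambda>N. (-1) ^ N * (q ^ 2) ^ tri (Suc N) / Pc (q ^ 2) N) sums X"
    using has_sum_imp_sums[OF S2] unfolding eN .
  moreover have "(\<lambda>N. (-1) ^ N * (q ^ 2) ^ tri (Suc N) / Pc (q ^ 2) N) sums J2"
    unfolding J2_def by (rule euler_sum[OF q2])
  ultimately have XJ: "X = J2" using sums_unique2 by blast
  have "((\<lambda>r. J1 * (q ^ (r * r + r) * alpha q r * (1 / J1))) has_sum (J1 * X)) UNIV"
    by (rule has_sum_cmult_right[OF S1])
  then show ?thesis using J1nz XJ unfolding J1_def J2_def by simp
qed

theorem mainTheorem8: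
  fixes \<tau> :: complex and q :: complex
  assumes "Im \<tau> > 0"
    and "q = exp (2 * pi * \<i> * \<tau>)"
  shows "hecke_f 2 2 1 (q ^ 2) q q = J q 1 * J q 2"
proof -
  have nq: "norm q = exp (- 2 * pi * Im \<tau>)" using assms(2) by (simp add: norm_exp_eq_Re)
  have q1: "norm q < 1" unfolding nq using assms(1) by simp
  have q0: "q \<noteq> 0" using assms(2) by simp
  have "hecke_f 2 2 1 (q ^ 2) q q = Pinf q * Pinf (q ^ 2)"
    using has_sum_unique[OF hecke_series[OF q1 q0] main_series[OF q1]] .
  moreover have "J q 1 = Pinf q" by (simp add: J_def Pinf_def)
  moreover have "J q 2 = Pinf (q ^ 2)" unfolding J_def Pinf_def power_mult ..
  ultimately show ?thesis by simp
qed


end
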